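(* Let $\mathbf A\in\mathbb R^{m\times n}$ and integers $0\le s<k<n$, and let $\lambda_1\ge\dots\ge\lambda_n>0$ be the eigenvalues of $\mathbf A^\top\mathbf A$. Let $S\sim k\text{-}\mathrm{DPP}(\mathbf A^\top\mathbf A)$ and $b=\min\{k-s,n-k\}$. Then for any $0<\epsilon\le\frac12$, \[ \frac{\mathbb E[\mathrm{Er}_{\mathbf A}(S)]}{\mathrm{OPT}_k}\le\big(1-e^{-\epsilon^2b/10}\big)^{-1}(1-\epsilon)^{-1}\,\Psi_s(k),\qquad\text{where }\Psi_s(k)=\frac{\lambda_{s+1}}{\lambda_n}\Big(1+\frac{s}{k-s}\Big). \]
   Context: For $\mathbf A\in\mathbb R^{m\times n}$ with columns $\mathbf a_1,\dots,\mathbf a_n$ and $S\subseteq\{1,\dots,n\}$, $\mathbf P_S$ is the orthogonal projection onto $\mathrm{span}\{\mathbf a_i:i\in S\}$, $\mathrm{Er}_{\mathbf A}(S)=\|\mathbf A-\mathbf P_S\mathbf A\|_F^2$, and $\mathrm{OPT}_k=\min_{\mathrm{rank}(\mathbf B)=k}\|\mathbf A-\mathbf B\|_F^2=\sum_{i>k}\lambda_i$. $S\sim k\text{-}\mathrm{DPP}(\mathbf A^\top\mathbf A)$ denotes the distribution over subsets $S$ with $|S|=k$ and $\Pr(S)\propto\det(\mathbf A_S^\top\mathbf A_S)$, $\mathbf A_S$ the submatrix of columns indexed by $S$. *)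

theory Defs
  imports "HOL-Analysis.Analysis"
begin

text \<open>Matrices A in R^{m x n} are modelled as real^'n^'m (m rows, n = CARD('n) columns);
column indices are elements of the finite type 'n.\<close>

definition eigs :: "real^'n^'n \<Rightarrow> real list" where
  "eigs M = (THE ls. length ls = CARD('n) \<and> sorted_wrt (\<ge>) ls \<and>
      (\<forall>x. det (mat x - M) = (\<Prod>i<CARD('n). x - ls ! i)))"

definition lam :: "real^'n^'m \<Rightarrow> nat \<Rightarrow> real" where
  "lam A i = eigs (transpose A ** A) ! (i - 1)"

definition frob2 :: "real^'n^'m \<Rightarrow> real" where
  "frob2 B = (\<Sum>i\<in>UNIV. \<Sum>j\<in>UNIV. (B $ i $ j)^2)"

definition projS :: "real^'n^'m \<Rightarrow> 'n set \<Rightarrow> real^'m \<Rightarrow> real^'m" where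
  "projS A S v = closest_point (span ((\<lambda>i. column i A) ` S)) v"

definition Er :: "real^'n^'m \<Rightarrow> 'n set \<Rightarrow> real" where
  "Er A S = frob2 (A - (\<chi> i j. projS A S (column j A) $ i))"

definition OPT :: "real^'n^'m \<Rightarrow> nat \<Rightarrow> real" where
  "OPT A k = Inf {frob2 (A - B) | B. rank B = k}"

text \<open>det(A_S^T A_S), Leibniz formula over the index set S.\<close>
definition gram_det :: "real^'n^'m \<Rightarrow> 'n set \<Rightarrow> real" where
  "gram_det A S = (\<Sum>p\<in>{p. p permutes S}. of_int (sign p) *
      (\<Prod>i\<in>S. column i A \<bullet> column (p i) A))"

text \<open>E[Er_A(S)] for S ~ k-DPP(A^T A): Pr(S) = det(A_S^T A_S) / sum_{|T|=k} det(A_T^T A_T).\<close>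
definition dpp_expected_Er :: "real^'n^'m \<Rightarrow> nat \<Rightarrow> real" where
  "dpp_expected_Er A k =
     (\<Sum>S\<in>{S. card S = k}. gram_det A S * Er A S) / (\<Sum>T\<in>{T. card T = k}. gram_det A T)"

end

theory Submission
  imports Defs "HOL-Computational_Algebra.Fundamental_Theorem_Algebra"
begin

definition pminor :: "'a::comm_ring_1^'n^'n \<Rightarrow> 'n set \<Rightarrow> 'a" where
  "pminor M S = (\<Sum>p\<in>{p. p permutes S}. of_int (sign p) * (\<Prod>i\<in>S. M$i$(p i)))"

lemma permutes_UNIV_fix: "(p permutes UNIV \<and> (\<forall>i\<in>X. p i = i)) \<longleftrightarrow> p permutes (- X)"
  unfolding permutes_def by auto

lemma charpoly_expand:
  fixes M :: "'a::comm_ring_1^'n^'n"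
  shows "det (mat x - M) = (\<Sum>X\<in>Pow UNIV. x ^ card X * (-1) ^ card (- X) * pminor M (- X))"
proof -
  have e: "(mat x - M)$i$(p i) = (if p i = i then x else 0) + (- M$i$(p i))" for i p
    by (auto simp: mat_def)
  have pr: "(\<Prod>i\<in>X. (if p i = i then x else 0)) = (if (\<forall>i\<in>X. p i = i) then x ^ card X else 0)"
    if "finite X" for X and p :: "'n \<Rightarrow> 'n"
    using that by (induction X rule: finite_induct) auto
  have pr2: "(\<Prod>i\<in>(- X). - M$i$(p i)) = (-1) ^ card (- X) * (\<Prod>i\<in>(- X). M$i$(p i))" for X and p :: "'n \<Rightarrow> 'n"
    by (rule prod_uminus)
  have "det (mat x - M) = (\<Sum>p\<in>{p. p permutes UNIV}. of_int (sign p) *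
      (\<Sum>X\<in>Pow UNIV. (\<Prod>i\<in>X. (if p i = i then x else 0)) * (\<Prod>i\<in>UNIV - X. - M$i$(p i))))"
    unfolding det_def e prod_add[OF finite] ..
  also have "\<dots> = (\<Sum>p\<in>{p. p permutes UNIV}. (\<Sum>X\<in>Pow UNIV.
      (if (\<forall>i\<in>X. p i = i) then x ^ card X * (-1) ^ card (- X) * (of_int (sign p) * (\<Prod>i\<in>(- X). M$i$(p i))) else 0)))"
    by (intro sum.cong refl) (auto simp: sum_distrib_left pr pr2 Compl_eq_Diff_UNIV[symmetric] intro!: sum.cong)
  also have "\<dots> = (\<Sum>X\<in>Pow UNIV. (\<Sum>p\<in>{p. p permutes UNIV}.
      (if (\<forall>i\<in>X. p i = i) then x ^ card X * (-1) ^ card (- X) * (of_int (sign p) * (\<Prod>i\<in>(- X). M$i$(p i))) else 0)))"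
    by (rule sum.swap)
  also have "\<dots> = (\<Sum>X\<in>Pow UNIV. x ^ card X * (-1) ^ card (- X) * pminor M (- X))"
  proof (intro sum.cong refl)
    fix X :: "'n set"
    have "(\<Sum>p\<in>{p. p permutes UNIV}.
      (if (\<forall>i\<in>X. p i = i) then x ^ card X * (-1) ^ card (- X) * (of_int (sign p) * (\<Prod>i\<in>(- X). M$i$(p i))) else 0))
      = (\<Sum>p\<in>{p. p permutes UNIV \<and> (\<forall>i\<in>X. p i = i)}. x ^ card X * (-1) ^ card (- X) * (of_int (sign p) * (\<Prod>i\<in>(- X). M$i$(p i))))"
      by (subst sum.inter_filter[symmetric]) (auto intro!: sum.cong)
    also have "\<dots> = x ^ card X * (-1) ^ card (- X) * pminor M (- X)"
      unfolding pminor_def permutes_UNIV_fix by (simp add: sum_distrib_left)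
    finally show "(\<Sum>p\<in>{p. p permutes UNIV}.
      (if (\<forall>i\<in>X. p i = i) then x ^ card X * (-1) ^ card (- X) * (of_int (sign p) * (\<Prod>i\<in>(- X). M$i$(p i))) else 0))
      = x ^ card X * (-1) ^ card (- X) * pminor M (- X)" .
  qed
  finally show ?thesis .
qed

definition esym :: "real list \<Rightarrow> nat \<Rightarrow> real" where
  "esym l j = (\<Sum>T\<in>{T. T \<subseteq> {..<length l} \<and> card T = j}. \<Prod>i\<in>T. l!i)"

definition Zs :: "'a::comm_ring_1^'n^'n \<Rightarrow> nat \<Rightarrow> 'a" where
  "Zs M j = (\<Sum>S\<in>{S. card S = j}. pminor M S)"

lemma sum_pow_group:
  fixes g :: "nat \<Rightarrow> 'a::comm_ring_1"
  assumes U: "finite U"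
  shows "(\<Sum>X\<in>Pow U. g (card X) * h (U - X)) =
         (\<Sum>i\<le>card U. g i * (\<Sum>T\<in>{T. T \<subseteq> U \<and> card T = card U - i}. h T))"
proof -
  have "(\<Sum>X\<in>Pow U. g (card X) * h (U - X)) =
        (\<Sum>X\<in>Pow U. \<Sum>i\<le>card U. if i = card X then g i * h (U - X) else 0)"
  proof (intro sum.cong refl)
    fix X assume "X \<in> Pow U"
    then have "card X \<le> card U" using U by (simp add: card_mono)
    then show "g (card X) * h (U - X) = (\<Sum>i\<le>card U. if i = card X then g i * h (U - X) else 0)"
      by (simp add: sum.delta')
  qed
  also have "\<dots> = (\<Sum>i\<le>card U. \<Sum>X\<in>Pow U. if i = card X then g i * h (U - X) else 0)"
    by (rule sum.swap)
  also have "\<dots> = (\<Sum>i\<le>card U. g i * (\<Sum>T\<in>{T. T \<subseteq> U \<and> card T = card U - i}. h T))"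
  proof (intro sum.cong refl)
    fix i assume i: "i \<in> {..card U}"
    have "(\<Sum>X\<in>Pow U. if i = card X then g i * h (U - X) else 0) =
          (\<Sum>X\<in>{X. X \<subseteq> U \<and> card X = i}. g i * h (U - X))"
      using U by (subst sum.inter_filter[symmetric]) (auto intro!: sum.cong)
    also have "\<dots> = g i * (\<Sum>X\<in>{X. X \<subseteq> U \<and> card X = i}. h (U - X))"
      by (simp add: sum_distrib_left)
    also have "(\<Sum>X\<in>{X. X \<subseteq> U \<and> card X = i}. h (U - X)) =
               (\<Sum>T\<in>{T. T \<subseteq> U \<and> card T = card U - i}. h T)"
    proof (rule sum.reindex_bij_witness[of _ "\<lambda>T. U - T" "\<lambda>X. U - X"])
      fix T assume T: "T \<in> {T. T \<subseteq> U \<and> card T = card U - i}"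
      show "U - (U - T) = T" using T by auto
      have fT: "finite T" using T U finite_subset by blast
      have "card (U - T) = card U - card T" by (rule card_Diff_subset) (use T fT in auto)
      then have "card (U - T) = i" using T i by simp
      then show "U - T \<in> {X. X \<subseteq> U \<and> card X = i}" using T by auto
    next
      fix X assume X: "X \<in> {X. X \<subseteq> U \<and> card X = i}"
      show "U - (U - X) = X" using X by auto
      have fX: "finite X" using X U finite_subset by blast
      have "card (U - X) = card U - card X" by (rule card_Diff_subset) (use X fX in auto)
      then show "U - X \<in> {T. T \<subseteq> U \<and> card T = card U - i}" using X by auto
      show "h (U - X) = h (U - X)" ..
    qed
    finally show "(\<Sum>X\<in>Pow U. if i = card X then g i * h (U - X) else 0) =
          g i * (\<Sum>T\<in>{T. T \<subseteq> U \<and> card T = card U - i}. h T)" .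
  qed
  finally show ?thesis .
qed

lemma charpoly_coeffs:
  fixes M :: "'a::comm_ring_1^'n^'n"
  shows "det (mat x - M) = (\<Sum>i\<le>CARD('n). ((-1)^(CARD('n) - i) * Zs M (CARD('n) - i)) * x^i)"
proof -
  have "det (mat x - M) = (\<Sum>X\<in>Pow UNIV. (x ^ card X * (-1) ^ (CARD('n) - card X)) * pminor M (UNIV - X))"
    unfolding charpoly_expand
    by (intro sum.cong refl) (simp add: Compl_eq_Diff_UNIV card_Diff_subset)
  also have "\<dots> = (\<Sum>i\<le>CARD('n). (x ^ i * (-1) ^ (CARD('n) - i)) * (\<Sum>T\<in>{T. T \<subseteq> UNIV \<and> card T = CARD('n) - i}. pminor M T))"
    by (rule sum_pow_group[where g = "\<lambda>i. x ^ i * (-1) ^ (CARD('n) - i)", OF finite, simplified])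
  also have "\<dots> = (\<Sum>i\<le>CARD('n). ((-1)^(CARD('n) - i) * Zs M (CARD('n) - i)) * x^i)"
    unfolding Zs_def by (intro sum.cong refl) (simp add: mult_ac)
  finally show ?thesis .
qed

lemma prod_coeffs:
  fixes x :: real
  shows "(\<Prod>i<length l. x - l!i) = (\<Sum>i\<le>length l. ((-1)^(length l - i) * esym l (length l - i)) * x^i)"
proof -
  have "(\<Prod>i<length l. x - l!i) = (\<Prod>i<length l. (\<lambda>_. x) i + (\<lambda>i. - l!i) i)" by simp
  also have "\<dots> = (\<Sum>X\<in>Pow {..<length l}. (\<Prod>i\<in>X. x) * (\<Prod>i\<in>{..<length l} - X. - l!i))"
    by (rule prod_add) simp
  also have "\<dots> = (\<Sum>X\<in>Pow {..<length l}. (x ^ card X * (-1) ^ (length l - card X)) * (\<Prod>i\<in>{..<length l} - X. l!i))"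
    by (intro sum.cong refl) (auto simp: prod_uminus card_Diff_subset finite_subset)
  also have "\<dots> = (\<Sum>i\<le>length l. (x ^ i * (-1) ^ (length l - i)) * (\<Sum>T\<in>{T. T \<subseteq> {..<length l} \<and> card T = length l - i}. \<Prod>i\<in>T. l!i))"
    using sum_pow_group[of "{..<length l}" "\<lambda>i. x ^ i * (-1) ^ (length l - i)" "\<lambda>T. \<Prod>i\<in>T. l!i"] by simp
  also have "\<dots> = (\<Sum>i\<le>length l. ((-1)^(length l - i) * esym l (length l - i)) * x^i)"
    unfolding esym_def by (intro sum.cong refl) (simp add: mult_ac)
  finally show ?thesis .
qed

lemma coeff_match:
  fixes M :: "real^'n^'n"
  assumes len: "length l = CARD('n)" and eq: "\<forall>x. det (mat x - M) = (\<Prod>i<CARD('n). x - l!i)"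
    and j: "j \<le> CARD('n)"
  shows "Zs M j = esym l j"
proof -
  have "\<forall>x. (\<Sum>i\<le>CARD('n). ((-1)^(CARD('n) - i) * Zs M (CARD('n) - i)) * x^i) =
            (\<Sum>i\<le>CARD('n). ((-1)^(CARD('n) - i) * esym l (CARD('n) - i)) * x^i)"
    using eq prod_coeffs[of _ l] len by (simp add: charpoly_coeffs)
  then have "\<forall>i\<le>CARD('n). (-1)^(CARD('n) - i) * Zs M (CARD('n) - i) = (-1)^(CARD('n) - i) * esym l (CARD('n) - i)"
    by (subst (asm) polyfun_eq_coeffs) 
  then have "(-1)^(CARD('n) - (CARD('n) - j)) * Zs M (CARD('n) - (CARD('n) - j)) =
             (-1)^(CARD('n) - (CARD('n) - j)) * esym l (CARD('n) - (CARD('n) - j))"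
    by simp
  then show ?thesis using j by simp
qed

definition cmat :: "real^'n^'n \<Rightarrow> complex^'n^'n" where
  "cmat M = (\<chi> i j. of_real (M$i$j))"

lemma pminor_cmat: "pminor (cmat M) S = of_real (pminor M S)"
  unfolding pminor_def cmat_def by (simp add: of_real_prod)

lemma Zs_cmat: "Zs (cmat M) j = of_real (Zs M j)"
  unfolding Zs_def by (simp add: pminor_cmat)

lemma det_cmat: "det (cmat M) = of_real (det M)"
  unfolding det_def cmat_def by (simp add: of_real_prod)

lemma cmat_charmat: "cmat (mat x - M) = mat (of_real x) - cmat M"
  unfolding cmat_def by (simp add: vec_eq_iff mat_def)

lemma sum_delta_l: "(\<Sum>k\<in>UNIV. (if i = k then z else 0) * f k) = (z::'a::comm_ring_1) * f (i::'n::finite)"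
proof -
  have "(\<Sum>k\<in>UNIV. (if i = k then z else 0) * f k) = (\<Sum>k\<in>UNIV. if i = k then z * f k else 0)"
    by (intro sum.cong) auto
  then show ?thesis by (simp add: sum.delta')
qed

lemma sum_delta_r: "(\<Sum>k\<in>UNIV. f k * (if k = j then w else 0)) = f (j::'n::finite) * (w::'a::comm_ring_1)"
proof -
  have "(\<Sum>k\<in>UNIV. f k * (if k = j then w else 0)) = (\<Sum>k\<in>UNIV. if k = j then f k * w else 0)"
    by (intro sum.cong) auto
  then show ?thesis by (simp add: sum.delta)
qed

lemma sum_delta_lr: "(\<Sum>k\<in>UNIV. (if i = k then z else 0) * (if k = (j::'n::finite) then w else 0)) = (if i = j then z * w else (0::'a::comm_ring_1))"
  by (simp add: sum_delta_l)

lemma mat_mulv: "mat c *v x = c *s (x :: 'a::comm_ring_1^'n)"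
  by (simp add: vec_eq_iff matrix_vector_mult_def mat_def sum_delta_l)

lemma mat_mult_expand:
  fixes X :: "'a::comm_ring_1^'n^'n"
  shows "(mat z - X) ** (mat w - X) = (\<chi> i j. (if i = j then z * w else 0) - (z + w) * X$i$j + (X ** X)$i$j)"
proof -
  have "((mat z - X) ** (mat w - X))$i$j = (if i = j then z * w else 0) - (z + w) * X$i$j + (X ** X)$i$j" for i j
  proof -
    have "((mat z - X) ** (mat w - X))$i$j = (\<Sum>k\<in>UNIV. ((if i = k then z else 0) - X$i$k) * ((if k = j then w else 0) - X$k$j))"
      by (simp add: matrix_matrix_mult_def mat_def)
    also have "\<dots> = (\<Sum>k\<in>UNIV. (if i = k then z else 0) * (if k = j then w else 0)) - (\<Sum>k\<in>UNIV. (if i = k then z else 0) * X$k$j)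
       - (\<Sum>k\<in>UNIV. X$i$k * (if k = j then w else 0)) + (\<Sum>k\<in>UNIV. X$i$k * X$k$j)"
      by (simp add: algebra_simps sum.distrib sum_subtractf)
    also have "\<dots> = (if i = j then z * w else 0) - (z + w) * X$i$j + (X ** X)$i$j"
      unfolding sum_delta_l sum_delta_r sum_delta_lr by (simp add: matrix_matrix_mult_def algebra_simps)
    finally show ?thesis .
  qed
  then show ?thesis by (simp add: vec_eq_iff)
qed

lemma sym_quad_nonneg:
  fixes N :: "real^'n^'n"
  assumes "transpose N = N"
  shows "x \<bullet> (N *v (N *v x)) = (N *v x) \<bullet> (N *v x)"
proof -
  have "x \<bullet> (N *v (N *v x)) = (x v* N) \<bullet> (N *v x)" by (simp add: dot_lmul_matrix)
  also have "x v* N = N *v x" using assms by (metis transpose_matrix_vector)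
  finally show ?thesis .
qed

lemma nonreal_det:
  fixes M :: "real^'n^'n"
  assumes sym: "transpose M = M" and im: "Im z \<noteq> 0"
  shows "det (mat z - cmat M) \<noteq> 0"
proof -
  define a where "a = Re z"
  define b where "b = Im z"
  define N where "N = mat a - M"
  define R where "R = N ** N + mat (b^2)"
  have symN: "transpose N = N" using sym unfolding N_def
    by (simp add: transpose_def vec_eq_iff mat_def)
  have Rinj: "R *v x = 0 \<Longrightarrow> x = 0" for x
  proof -
    assume Rx: "R *v x = 0"
    have "R *v x = N *v (N *v x) + b^2 *s x"
      unfolding R_def by (simp add: matrix_vector_mult_add_rdistrib matrix_vector_mul_assoc mat_mulv)
    then have "0 = x \<bullet> (N *v (N *v x)) + b^2 * (x \<bullet> x)" using Rx
      by (metis inner_add_right inner_scaleR_right inner_zero_right scalar_mult_eq_scaleR)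
    also have "\<dots> = (N *v x) \<bullet> (N *v x) + b^2 * (x \<bullet> x)" using sym_quad_nonneg[OF symN] by simp
    finally have "(N *v x) \<bullet> (N *v x) + b^2 * (x \<bullet> x) = 0" by simp
    moreover have "b^2 > 0" using im b_def by simp
    moreover have "(N *v x) \<bullet> (N *v x) \<ge> 0" by simp
    moreover have "x \<bullet> x \<ge> 0" by simp
    ultimately have "x \<bullet> x = 0"
      by (smt (verit, best) mult_pos_pos)
    then show "x = 0" by simp
  qed
  have "det R \<noteq> 0"
    using Rinj invertible_det_nz invertible_left_inverse matrix_left_invertible_ker by blast
  have prod: "(mat z - cmat M) ** (mat (cnj z) - cmat M) = cmat R"
  proof -
    have zz: "z * cnj z = of_real (a^2 + b^2)" "z + cnj z = of_real (2 * a)"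
      unfolding a_def b_def by (simp_all add: complex_eq_iff power2_eq_square)
    have MM: "cmat M ** cmat M = cmat (M ** M)"
      by (simp add: cmat_def matrix_matrix_mult_def vec_eq_iff)
    have NN: "(N ** N) = (\<chi> i j. (if i = j then a * a else 0) - (a + a) * M$i$j + (M ** M)$i$j)"
      unfolding N_def by (rule mat_mult_expand)
    show ?thesis
      unfolding mat_mult_expand R_def MM NN
      by (simp add: vec_eq_iff cmat_def zz mat_def power2_eq_square algebra_simps)
  qed
  have "det (mat z - cmat M) * det (mat (cnj z) - cmat M) \<noteq> 0"
    unfolding det_mul[symmetric] prod det_cmat using \<open>det R \<noteq> 0\<close> by simp
  then show ?thesis by auto
qed

lemma Zs0: "Zs (M::'a::comm_ring_1^'n^'n) 0 = 1"
proof -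
  have "{S::'n set. card S = 0} = {{}}" by auto
  moreover have "{p. p permutes ({}::'n set)} = {id}" by auto
  ultimately show ?thesis unfolding Zs_def pminor_def by simp
qed

lemma poly_linprod: "poly (\<Prod>z\<leftarrow>zs. [:-z,1:]) y = (\<Prod>z\<leftarrow>zs. y - (z::'a::comm_ring_1))"
proof (induction zs)
  case (Cons a zs)
  have "poly [:-a,1:] y = y - a" by simp
  then show ?case using Cons by (simp add: left_diff_distrib)
qed simp

lemma of_real_linprod:
  assumes "\<forall>z\<in>set zs. Im z = 0"
  shows "(\<Prod>z\<leftarrow>zs. complex_of_real x - z) = complex_of_real (\<Prod>r\<leftarrow>map Re zs. x - r)"
  using assms by (induction zs) (auto simp: complex_eq_iff)

lemma prod_list_mset_eq:
  assumes "mset a = mset b"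
  shows "prod_list (map f a) = (prod_list (map f b) :: 'b::comm_monoid_mult)"
  by (metis assms mset_map prod_mset_prod_list)

lemma prod_list_nth: "(\<Prod>r\<leftarrow>l. f r) = (\<Prod>i<length l. f (l!i))"
  by (subst prod.list_conv_set_nth) (auto simp: atLeast0LessThan)

lemma eigs_exists:
  fixes M :: "real^'n^'n"
  assumes sym: "transpose M = M"
  shows "\<exists>ls. length ls = CARD('n) \<and> sorted_wrt (\<ge>) ls \<and> (\<forall>x. det (mat x - M) = (\<Prod>i<CARD('n). x - ls!i))"
proof -
  define n where "n = CARD('n)"
  define c where "c i = (-1)^(n-i) * Zs M (n-i)" for i
  define P :: "complex poly" where "P = (\<Sum>i\<le>n. monom (of_real (c i)) i)"
  have hP: "poly P z = det (mat z - cmat M)" for z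
    unfolding P_def charpoly_coeffs poly_sum poly_monom c_def n_def Zs_cmat by simp
  have coeffP: "coeff P i = (if i \<le> n then of_real (c i) else 0)" for i
    unfolding P_def coeff_sum by (simp add: sum.delta)
  have cn: "c n = 1" unfolding c_def by (simp add: Zs0)
  have degP: "degree P = n"
  proof (rule antisym)
    show "degree P \<le> n" by (rule degree_le) (simp add: coeffP)
    show "n \<le> degree P" by (rule le_degree) (simp add: coeffP cn)
  qed
  have lcP: "lead_coeff P = 1" using degP coeffP cn by simp
  have P0: "P \<noteq> 0" using lcP by auto
  have decomp: "P = (\<Prod>x\<in>#proots P. [:-x, 1:])"
    using complex_poly_decompose_multiset[of P] lcP by simp
  obtain ls0 where ls0: "mset ls0 = proots P" using ex_mset by blast
  have len0: "length ls0 = n"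
    using size_proots_complex[of P] degP ls0 by (metis size_mset)
  have P_ls0: "P = (\<Prod>z\<leftarrow>ls0. [:-z,1:])"
    using decomp ls0 by (metis mset_map prod_mset_prod_list)
  have real0: "\<forall>z\<in>set ls0. Im z = 0"
  proof
    fix z assume "z \<in> set ls0"
    then have "z \<in># proots P" using ls0 by (metis set_mset_mset)
    then have "poly P z = 0" using P0 by simp
    then show "Im z = 0" using hP nonreal_det[OF sym] by metis
  qed
  define rl where "rl = map Re ls0"
  define ls where "ls = rev (sort rl)"
  have "complex_of_real (det (mat x - M)) = complex_of_real (\<Prod>r\<leftarrow>rl. x - r)" for x
  proof -
    have "complex_of_real (det (mat x - M)) = det (cmat (mat x - M))" by (simp add: det_cmat)
    also have "\<dots> = poly P (of_real x)" by (simp add: cmat_charmat hP)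
    also have "\<dots> = (\<Prod>z\<leftarrow>ls0. complex_of_real x - z)" by (subst P_ls0) (simp add: poly_linprod)
    also have "\<dots> = complex_of_real (\<Prod>r\<leftarrow>rl. x - r)" unfolding rl_def by (rule of_real_linprod[OF real0])
    finally show ?thesis .
  qed
  then have e1: "det (mat x - M) = (\<Prod>r\<leftarrow>rl. x - r)" for x by (metis of_real_eq_iff)
  have "mset ls = mset rl" unfolding ls_def by simp
  then have e2: "det (mat x - M) = (\<Prod>i<length ls. x - ls!i)" for x
    using e1 prod_list_mset_eq[of ls rl "\<lambda>r. x - r"] prod_list_nth[of "\<lambda>r. x - r" ls] by simp
  have lenl: "length ls = CARD('n)" unfolding ls_def rl_def using len0 n_def by simp
  have "sorted_wrt (\<ge>) ls" unfolding ls_def by (simp add: sorted_wrt_rev)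
  moreover have "\<forall>x. det (mat x - M) = (\<Prod>i<CARD('n). x - ls!i)" using e2 lenl by simp
  ultimately show ?thesis using lenl by blast
qed

lemma proots_linprod: "proots (\<Prod>r\<leftarrow>l. [:-r, 1:]) = mset (l :: real list)"
proof (induction l)
  case Nil
  then show ?case by simp
next
  case (Cons a l)
  have nz: "(\<Prod>r\<leftarrow>l. [:-r, 1:]) \<noteq> 0" by (auto simp: prod_list_zero_iff)
  have "proots ([:-a, 1:] * (\<Prod>r\<leftarrow>l. [:-r, 1:])) = proots [:-a, 1:] + proots (\<Prod>r\<leftarrow>l. [:-r, 1:])"
    by (rule proots_mult) (use nz in auto)
  then show ?case using Cons by simp
qed

lemma eigs_unique:
  fixes l1 l2 :: "real list"
  assumes "length l1 = n" "length l2 = n" "sorted_wrt (\<ge>) l1" "sorted_wrt (\<ge>) l2"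
    and eq: "\<forall>x. (\<Prod>i<n. x - l1!i) = (\<Prod>i<n. x - l2!i)"
  shows "l1 = l2"
proof -
  have "poly (\<Prod>r\<leftarrow>l1. [:-r, 1:]) = poly (\<Prod>r\<leftarrow>l2. [:-r, 1:])"
  proof (rule ext)
    fix x
    show "poly (\<Prod>r\<leftarrow>l1. [:-r, 1:]) x = poly (\<Prod>r\<leftarrow>l2. [:-r, 1:]) x"
      unfolding poly_linprod using eq assms(1,2) prod_list_nth[of "\<lambda>r. x - r" l1] prod_list_nth[of "\<lambda>r. x - r" l2]
      by simp
  qed
  then have "(\<Prod>r\<leftarrow>l1. [:-r, 1:]) = (\<Prod>r\<leftarrow>l2. [:-r, 1:])" by (simp add: poly_eq_poly_eq_iff)
  then have m: "mset l1 = mset l2" by (metis proots_linprod)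
  have "sort (rev l2) = rev l1"
    by (rule properties_for_sort) (use m assms(3) in \<open>auto simp: sorted_wrt_rev\<close>)
  moreover have "sort (rev l2) = rev l2"
    by (rule properties_for_sort) (use assms(4) in \<open>auto simp: sorted_wrt_rev\<close>)
  ultimately show ?thesis by simp
qed

lemma eigs_prop:
  fixes M :: "real^'n^'n"
  assumes sym: "transpose M = M"
  shows "length (eigs M) = CARD('n) \<and> sorted_wrt (\<ge>) (eigs M) \<and> (\<forall>x. det (mat x - M) = (\<Prod>i<CARD('n). x - eigs M!i))"
proof -
  obtain ls where ls: "length ls = CARD('n) \<and> sorted_wrt (\<ge>) ls \<and> (\<forall>x. det (mat x - M) = (\<Prod>i<CARD('n). x - ls!i))"
    using eigs_exists[OF sym] by blast
  have "\<exists>!ls. length ls = CARD('n) \<and> sorted_wrt (\<ge>) ls \<and> (\<forall>x. det (mat x - M) = (\<Prod>i<CARD('n). x - ls!i))"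
  proof (rule ex1I[of _ ls])
    show "length ls = CARD('n) \<and> sorted_wrt (\<ge>) ls \<and> (\<forall>x. det (mat x - M) = (\<Prod>i<CARD('n). x - ls!i))" by (rule ls)
    fix l2 assume l2: "length l2 = CARD('n) \<and> sorted_wrt (\<ge>) l2 \<and> (\<forall>x. det (mat x - M) = (\<Prod>i<CARD('n). x - l2!i))"
    show "l2 = ls" by (rule eigs_unique[of l2 "CARD('n)" ls]) (use l2 ls in auto)
  qed
  then show ?thesis unfolding eigs_def by (rule theI')
qed

lemma sym_inner:
  fixes N :: "real^'n^'n"
  assumes "transpose N = N"
  shows "x \<bullet> (N *v y) = (N *v x) \<bullet> y"
proof -
  have "x \<bullet> (N *v y) = (x v* N) \<bullet> y" by (simp add: dot_lmul_matrix)
  also have "x v* N = N *v x" using assms by (metis transpose_matrix_vector)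
  finally show ?thesis .
qed

lemma det_zero_if_ker:
  fixes A :: "real^'n^'n"
  assumes "A *v u = 0" "u \<noteq> 0"
  shows "det A = 0"
  using assms invertible_det_nz invertible_left_inverse matrix_left_invertible_ker by blast

lemma psd_kernel:
  fixes N :: "real^'n^'n"
  assumes sym: "transpose N = N" and psd: "\<And>v. v \<bullet> (N *v v) \<ge> 0" and z: "u \<bullet> (N *v u) = 0"
  shows "N *v u = 0"
proof -
  define w where "w = N *v u"
  define q where "q = w \<bullet> w"
  define c where "c = w \<bullet> (N *v w)"
  have c0: "c \<ge> 0" unfolding c_def by (rule psd)
  have q0: "q \<ge> 0" unfolding q_def by simp
  have key: "0 \<le> 2 * t * q + t^2 * c" for t
  proof -
    have lin: "linear ((*v) N)" by (simp add: matrix_vector_mul_linear)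
    have "0 \<le> (u + t *\<^sub>R w) \<bullet> (N *v (u + t *\<^sub>R w))" by (rule psd)
    also have "\<dots> = u \<bullet> (N *v u) + t * (u \<bullet> (N *v w)) + t * (w \<bullet> (N *v u)) + t^2 * c"
      unfolding c_def using linear_add[OF lin] linear_cmul[OF lin]
      by (simp add: inner_add_left inner_add_right power2_eq_square algebra_simps)
    also have "u \<bullet> (N *v w) = (N *v u) \<bullet> w" by (rule sym_inner[OF sym])
    finally show ?thesis using z unfolding q_def w_def by (simp add: inner_commute)
  qed
  have "q = 0"
  proof (rule ccontr)
    assume "q \<noteq> 0"
    then have qp: "q > 0" using q0 by simp
    define t where "t = - q / (c + 1)"
    have c1: "c + 1 \<noteq> 0" using c0 by simp
    have ts: "t * (c + 1) = - q" using c1 by (simp add: t_def)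
    have "0 \<le> (c + 1)^2 * (2 * t * q + t^2 * c)" using key[of t] by simp
    also have "(c + 1)^2 * (2 * t * q + t^2 * c) = 2 * q * (c + 1) * (t * (c + 1)) + (t * (c + 1))^2 * c"
      by (simp add: algebra_simps power2_eq_square)
    also have "\<dots> = - (q * q) * (c + 2)" unfolding ts by (simp add: algebra_simps power2_eq_square)
    also have "\<dots> < 0" using qp c0 by (simp add: mult_pos_pos)
    finally show False by simp
  qed
  then show ?thesis unfolding q_def w_def by simp
qed

lemma rayleigh:
  fixes M :: "real^'n^'n"
  assumes sym: "transpose M = M"
    and len: "length l = CARD('n)" and sl: "sorted_wrt (\<ge>) l"
    and cp: "\<forall>x. det (mat x - M) = (\<Prod>i<CARD('n). x - l!i)"
  shows "x \<bullet> (M *v x) \<ge> l ! (CARD('n) - 1) * (x \<bullet> x)"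
proof -
  define f where "f u = u \<bullet> (M *v u)" for u :: "real^'n"
  have cont: "continuous_on (sphere 0 1) f"
    unfolding f_def by (intro continuous_intros continuous_on_compose2[OF matrix_vector_mult_linear_continuous_on[of UNIV M]]) auto
  have ne: "sphere (0::real^'n) 1 \<noteq> {}"
  proof -
    have "axis undefined (1::real) \<in> sphere (0::real^'n) 1" by (simp add: norm_axis_1)
    then show ?thesis by blast
  qed
  obtain u0 where u0: "u0 \<in> sphere 0 1" and umin: "\<And>y. y \<in> sphere 0 1 \<Longrightarrow> f u0 \<le> f y"
    using continuous_attains_inf[OF compact_sphere ne cont] by blast
  define \<mu> where "\<mu> = f u0"
  have lin: "linear ((*v) M)" by (simp add: matrix_vector_mul_linear)
  have all: "v \<bullet> (M *v v) \<ge> \<mu> * (v \<bullet> v)" for v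
  proof (cases "v = 0")
    case True then show ?thesis by simp
  next
    case False
    define y where "y = (1 / norm v) *\<^sub>R v"
    have "y \<in> sphere 0 1" unfolding y_def using False by simp
    then have "\<mu> \<le> f y" unfolding \<mu>_def by (rule umin)
    also have "f y = (v \<bullet> (M *v v)) / (norm v)^2"
      unfolding f_def y_def using linear_cmul[OF lin] by (simp add: power2_eq_square)
    finally have "\<mu> * (norm v)^2 \<le> v \<bullet> (M *v v)" using False by (simp add: field_simps)
    then show ?thesis by (simp add: power2_norm_eq_inner)
  qed
  define N where "N = M - mat \<mu>"
  have Nv: "N *v v = M *v v - \<mu> *\<^sub>R v" for v
    unfolding N_def by (simp add: matrix_vector_mult_diff_rdistrib mat_mulv scalar_mult_eq_scaleR)
  have symN: "transpose N = N" using sym unfolding N_def by (simp add: transpose_def vec_eq_iff mat_def)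
  have psd: "v \<bullet> (N *v v) \<ge> 0" for v using all[of v] by (simp add: Nv inner_diff_right)
  have nu0: "norm u0 = 1" using u0 by simp
  have "u0 \<bullet> (N *v u0) = 0" using nu0 unfolding Nv \<mu>_def f_def
    by (simp add: inner_diff_right power2_norm_eq_inner[symmetric])
  then have "N *v u0 = 0" by (rule psd_kernel[OF symN psd])
  then have "(mat \<mu> - M) *v u0 = 0"
    by (simp add: matrix_vector_mult_diff_rdistrib mat_mulv scalar_mult_eq_scaleR Nv)
  moreover have "u0 \<noteq> 0" using nu0 by auto
  ultimately have "det (mat \<mu> - M) = 0" by (rule det_zero_if_ker)
  then have "(\<Prod>i<CARD('n). \<mu> - l!i) = 0" using cp by simp
  then obtain i where i: "i < CARD('n)" "\<mu> = l!i" by auto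
  have "l ! (CARD('n) - 1) \<le> l ! i"
  proof (cases "i = CARD('n) - 1")
    case False
    then have "i < CARD('n) - 1" using i by simp
    then show ?thesis using sorted_wrt_nth_less[OF sl, of i "CARD('n) - 1"] len by simp
  qed simp
  then have "l ! (CARD('n) - 1) * (x \<bullet> x) \<le> \<mu> * (x \<bullet> x)" using i by (simp add: mult_right_mono)
  also have "\<dots> \<le> x \<bullet> (M *v x)" by (rule all)
  finally show ?thesis .
qed

definition sdet :: "'n set \<Rightarrow> ('n \<Rightarrow> 'n \<Rightarrow> real) \<Rightarrow> real" where
  "sdet T B = (\<Sum>p\<in>{p. p permutes T}. of_int (sign p) * (\<Prod>i\<in>T. B i (p i)))"

definition extm :: "'n::finite set \<Rightarrow> ('n \<Rightarrow> 'n \<Rightarrow> real) \<Rightarrow> real^'n^'n" where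
  "extm T B = (\<chi> i l. if i \<in> T \<and> l \<in> T then B i l else if i = l then 1 else 0)"

lemma sdet_extm:
  fixes T :: "'n::finite set"
  shows "sdet T B = det (extm T B)"
proof -
  have "det (extm T B) = (\<Sum>p\<in>{p. p permutes UNIV}. if p permutes T then of_int (sign p) * (\<Prod>i\<in>T. B i (p i)) else 0)"
    unfolding det_def
  proof (intro sum.cong refl)
    fix p :: "'n \<Rightarrow> 'n" assume "p \<in> {p. p permutes UNIV}"
    then have pU: "p permutes UNIV" by simp
    show "of_int (sign p) * (\<Prod>i\<in>UNIV. extm T B $ i $ p i) =
      (if p permutes T then of_int (sign p) * (\<Prod>i\<in>T. B i (p i)) else 0)"
    proof (cases "p permutes T")
      case True
      have "(\<Prod>i\<in>UNIV. extm T B $ i $ p i) = (\<Prod>i\<in>T. extm T B $ i $ p i) * (\<Prod>i\<in>UNIV - T. extm T B $ i $ p i)"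
        by (subst prod.subset_diff[of T UNIV]) (auto simp: mult.commute)
      also have "(\<Prod>i\<in>T. extm T B $ i $ p i) = (\<Prod>i\<in>T. B i (p i))"
        using True by (intro prod.cong refl) (simp add: extm_def permutes_in_image)
      also have "(\<Prod>i\<in>UNIV - T. extm T B $ i $ p i) = 1"
        using True by (intro prod.neutral) (simp add: extm_def permutes_not_in)
      finally show ?thesis using True by simp
    next
      case False
      have "\<exists>i. i \<notin> T \<and> p i \<noteq> i"
      proof (rule ccontr)
        assume "\<not> ?thesis"
        then have "\<forall>i. i \<notin> T \<longrightarrow> p i = i" by blast
        then have "p permutes T" using pU unfolding permutes_def by blast
        then show False using False by simp
      qed
      then obtain i where i: "i \<notin> T" "p i \<noteq> i" by blast
      have "(\<Prod>i\<in>UNIV. extm T B $ i $ p i) = 0"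
        by (rule prod_zero) (use i in \<open>auto simp: extm_def intro!: bexI[of _ i]\<close>)
      then show ?thesis using False by simp
    qed
  qed
  also have "\<dots> = (\<Sum>p\<in>{p. p permutes T}. of_int (sign p) * (\<Prod>i\<in>T. B i (p i)))"
  proof (rule sum.mono_neutral_cong_right)
    show "finite {p. p permutes (UNIV::'n set)}" by (simp add: finite_permutations)
    show "{p. p permutes T} \<subseteq> {p. p permutes (UNIV::'n set)}" using permutes_subset by blast
  qed simp_all
  finally show ?thesis unfolding sdet_def ..
qed

lemma sdet_insert_orth:
  fixes S :: "'n::finite set"
  assumes j: "j \<notin> S" and Bj: "\<And>l. l \<in> S \<Longrightarrow> B j l = 0"
  shows "sdet (insert j S) B = B j j * sdet S B"
proof -
  have "sdet (insert j S) B = (\<Sum>p\<in>{p. p permutes insert j S}. of_int (sign p) * (B j (p j) * (\<Prod>i\<in>S. B i (p i))))"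
    unfolding sdet_def using j by (simp add: prod.insert)
  also have "\<dots> = (\<Sum>p\<in>{p. p permutes insert j S}. if p j = j then of_int (sign p) * (B j j * (\<Prod>i\<in>S. B i (p i))) else 0)"
  proof (intro sum.cong refl)
    fix p assume "p \<in> {p. p permutes insert j S}"
    then have "p j \<in> insert j S" using permutes_in_image[of p "insert j S" j] by simp
    then show "of_int (sign p) * (B j (p j) * (\<Prod>i\<in>S. B i (p i))) =
          (if p j = j then of_int (sign p) * (B j j * (\<Prod>i\<in>S. B i (p i))) else 0)"
      using Bj by auto
  qed
  also have "\<dots> = (\<Sum>p\<in>{p. p permutes insert j S \<and> p j = j}. of_int (sign p) * (B j j * (\<Prod>i\<in>S. B i (p i))))"
    by (subst sum.inter_filter[symmetric]) (auto intro!: sum.cong)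
  also have "{p. p permutes insert j S \<and> p j = j} = {p. p permutes S}"
  proof (intro set_eqI iffI; clarsimp)
    fix p assume "p permutes insert j S" "p j = j"
    then show "p permutes S" unfolding permutes_def by auto
  next
    fix p assume "p permutes S"
    then show "p permutes insert j S \<and> p j = j"
      using j permutes_subset[of p S "insert j S"] permutes_not_in[of p S j] by auto
  qed
  finally have "sdet (insert j S) B = (\<Sum>p\<in>{p. p permutes S}. of_int (sign p) * (B j j * (\<Prod>i\<in>S. B i (p i))))" .
  also have "\<dots> = B j j * sdet S B" unfolding sdet_def sum_distrib_left
    by (intro sum.cong refl) (simp only: mult.left_commute)
  finally show ?thesis .
qed

lemma span_image_repr:
  fixes f :: "'i \<Rightarrow> 'a::real_vector"
  assumes "finite S" "x \<in> span (f ` S)"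
  shows "\<exists>c. x = (\<Sum>i\<in>S. c i *\<^sub>R f i)"
proof -
  let ?W = "{x. \<exists>c. x = (\<Sum>i\<in>S. c i *\<^sub>R f i)}"
  have sub: "subspace ?W" unfolding subspace_def
  proof (intro conjI ballI allI)
    show "0 \<in> ?W" by (intro CollectI exI[of _ "\<lambda>_. 0"]) simp
  next
    fix x y assume "x \<in> ?W" "y \<in> ?W"
    then obtain c d where "x = (\<Sum>i\<in>S. c i *\<^sub>R f i)" "y = (\<Sum>i\<in>S. d i *\<^sub>R f i)" by blast
    then have "x + y = (\<Sum>i\<in>S. (c i + d i) *\<^sub>R f i)" by (simp add: sum.distrib scaleR_add_left)
    then show "x + y \<in> ?W" by (intro CollectI exI[of _ "\<lambda>i. c i + d i"])
  next
    fix a x assume "x \<in> ?W"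
    then obtain c where "x = (\<Sum>i\<in>S. c i *\<^sub>R f i)" by blast
    then have "a *\<^sub>R x = (\<Sum>i\<in>S. (a * c i) *\<^sub>R f i)" by (simp add: scaleR_sum_right)
    then show "a *\<^sub>R x \<in> ?W" by (intro CollectI exI[of _ "\<lambda>i. a * c i"])
  qed
  have "f ` S \<subseteq> ?W"
  proof
    fix x assume "x \<in> f ` S"
    then obtain i where i: "i \<in> S" "x = f i" by blast
    have "(\<Sum>l\<in>S. (if l = i then 1 else 0) *\<^sub>R f l) = (\<Sum>l\<in>S. if l = i then f l else 0)"
      by (intro sum.cong) auto
    also have "\<dots> = f i" using assms(1) i(1) by (simp add: sum.delta)
    finally have "f i = (\<Sum>l\<in>S. (if l = i then 1 else 0) *\<^sub>R f l)" by simp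
    then show "x \<in> ?W" unfolding i(2) by (intro CollectI exI[of _ "\<lambda>l. if l = i then 1 else 0"])
  qed
  then have "span (f ` S) \<subseteq> ?W" using sub by (rule span_minimal)
  then show ?thesis using assms(2) by blast
qed

lemma proj_props:
  fixes V :: "(real^'m) set"
  assumes "subspace V"
  shows "closest_point V a \<in> V" and "\<And>v. v \<in> V \<Longrightarrow> (a - closest_point V a) \<bullet> v = 0"
proof -
  have cl: "closed V" using assms closed_subspace by blast
  have ne: "V \<noteq> {}" using assms subspace_0 by blast
  have cv: "convex V" using assms subspace_imp_convex by blast
  show P: "closest_point V a \<in> V" by (rule closest_point_in_set[OF cl ne])
  fix v assume v: "v \<in> V"
  have "closest_point V a + v \<in> V" using P v assms subspace_add by blast
  from closest_point_dot[OF cv cl this, of a] have 1: "(a - closest_point V a) \<bullet> v \<le> 0" by simp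
  have "closest_point V a - v \<in> V" using P v assms subspace_diff by blast
  from closest_point_dot[OF cv cl this, of a] have 2: "(a - closest_point V a) \<bullet> v \<ge> 0" by simp
  show "(a - closest_point V a) \<bullet> v = 0" using 1 2 by simp
qed

lemma gram_sdet: "gram_det A S = sdet S (\<lambda>i l. column i A \<bullet> column l A)"
  unfolding gram_det_def sdet_def ..

lemma schur:
  fixes A :: "real^'n^'m"
  assumes j: "j \<notin> S"
  shows "gram_det A (insert j S) = gram_det A S *
    ((column j A - projS A S (column j A)) \<bullet> (column j A - projS A S (column j A)))"
proof -
  define a where "a i = column i A" for i
  define V where "V = span (a ` S)"
  define P where "P = projS A S (a j)"
  define r where "r = a j - P"
  have subV: "subspace V" unfolding V_def by simp
  have PV: "P \<in> V" unfolding P_def projS_def V_def a_def by (rule proj_props(1)[OF subspace_span])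
  have rV: "\<And>v. v \<in> V \<Longrightarrow> r \<bullet> v = 0" unfolding r_def P_def projS_def V_def a_def
    by (rule proj_props(2)[OF subspace_span])
  obtain c where c: "P = (\<Sum>i\<in>S. c i *\<^sub>R a i)"
    using span_image_repr[of S P a] PV unfolding V_def by auto
  have ra: "r \<bullet> a i = 0" if "i \<in> S" for i using rV that unfolding V_def by (simp add: span_base)
  define T where "T = insert j S"
  define B where "B i l = a i \<bullet> a l" for i l
  define B1 where "B1 i l = (if i = j then r \<bullet> a l else B i l)" for i l
  define G where "G = extm T B"
  define x where "x = - (\<Sum>i\<in>S. c i *s row i G)"
  have xspan: "x \<in> vec.span {row l G | l. l \<noteq> j}"
    unfolding x_def
    by (intro vec.span_neg vec.span_sum vec.span_scale vec.span_base) (use j in auto)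
  have dG: "det (\<chi> k. if k = j then row j G + x else row k G) = det G"
    by (rule det_row_span[OF xspan])
  have xl: "x $ l = - (\<Sum>i\<in>S. c i * G $ i $ l)" for l
    unfolding x_def by (simp add: row_def)
  have mat_eq: "(\<chi> k. if k = j then row j G + x else row k G) = extm T B1"
  proof -
    have "(if k = j then row j G + x else row k G) $ l = extm T B1 $ k $ l" for k l
    proof (cases "k = j")
      case True
      show ?thesis
      proof (cases "l \<in> T")
        case True
        have "(row j G + x) $ l = a j \<bullet> a l - (\<Sum>i\<in>S. c i * (a i \<bullet> a l))"
          using True j by (simp add: xl row_def G_def extm_def T_def B_def)
        also have "\<dots> = r \<bullet> a l"
          unfolding r_def c by (simp add: inner_diff_left inner_sum_left)
        finally show ?thesis using \<open>k = j\<close> True by (simp add: extm_def B1_def T_def)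
      next
        case False
        then have lj: "l \<noteq> j" "l \<notin> S" unfolding T_def by auto
        have "(\<Sum>i\<in>S. c i * (if i = l then 1 else 0)) = 0"
          by (intro sum.neutral) (use lj in auto)
        then show ?thesis using lj using \<open>k = j\<close> by (simp add: xl row_def G_def extm_def T_def)
      qed
    next
      case False
      then show ?thesis by (simp add: row_def G_def extm_def B1_def)
    qed
    then show ?thesis by (simp add: vec_eq_iff)
  qed
  have "gram_det A T = sdet T B" unfolding gram_sdet B_def a_def ..
  also have "\<dots> = det G" unfolding G_def by (rule sdet_extm)
  also have "\<dots> = det (extm T B1)" using dG mat_eq by simp
  also have "\<dots> = sdet T B1" by (rule sdet_extm[symmetric])
  also have "\<dots> = B1 j j * sdet S B1" unfolding T_def
    by (rule sdet_insert_orth[OF j]) (simp add: B1_def ra)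
  also have "sdet S B1 = sdet S B" unfolding sdet_def
    by (intro sum.cong refl arg_cong2[where f = "(*)"] prod.cong) (use j in \<open>auto simp: B1_def\<close>)
  also have "B1 j j = r \<bullet> r"
  proof -
    have "B1 j j = r \<bullet> (r + P)" by (simp add: B1_def r_def)
    also have "\<dots> = r \<bullet> r" using rV[OF PV] by (simp add: inner_add_right)
    finally show ?thesis .
  qed
  also have "sdet S B = gram_det A S" unfolding gram_sdet B_def a_def ..
  finally show ?thesis unfolding T_def r_def P_def a_def by (simp add: mult.commute)
qed

lemma double_count:
  assumes N: "finite N"
  shows "(\<Sum>S\<in>{S. S \<subseteq> N \<and> card S = k}. \<Sum>j\<in>N - S. h S j) =
         (\<Sum>U\<in>{U. U \<subseteq> N \<and> card U = Suc k}. \<Sum>j\<in>U. h (U - {j}) j)"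
proof -
  have f1: "finite {S. S \<subseteq> N \<and> card S = k}" using N by simp
  have f2: "finite {U. U \<subseteq> N \<and> card U = Suc k}" using N by simp
  have "(\<Sum>S\<in>{S. S \<subseteq> N \<and> card S = k}. \<Sum>j\<in>N - S. h S j) =
        (\<Sum>(S, j)\<in>Sigma {S. S \<subseteq> N \<and> card S = k} (\<lambda>S. N - S). h S j)"
    by (rule sum.Sigma) (use f1 N in auto)
  also have "\<dots> = (\<Sum>(U, j)\<in>Sigma {U. U \<subseteq> N \<and> card U = Suc k} (\<lambda>U. U). h (U - {j}) j)"
  proof (rule sum.reindex_bij_witness[of _ "\<lambda>(U, j). (U - {j}, j)" "\<lambda>(S, j). (insert j S, j)"])
    fix b assume b: "b \<in> Sigma {S. S \<subseteq> N \<and> card S = k} (\<lambda>S. N - S)"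
    obtain S j where bS: "b = (S, j)" by (cases b)
    have S: "S \<subseteq> N" "card S = k" "j \<in> N" "j \<notin> S" using b bS by auto
    have fS: "finite S" using S N finite_subset by blast
    show "(case case b of (S, j) \<Rightarrow> (insert j S, j) of (U, j) \<Rightarrow> (U - {j}, j)) = b"
      using S bS by auto
    show "(case b of (S, j) \<Rightarrow> (insert j S, j)) \<in> Sigma {U. U \<subseteq> N \<and> card U = Suc k} (\<lambda>U. U)"
      using S fS bS by auto
    show "(case case b of (S, j) \<Rightarrow> (insert j S, j) of (U, j) \<Rightarrow> h (U - {j}) j) = (case b of (S, j) \<Rightarrow> h S j)"
      using S bS by auto
  next
    fix a assume a: "a \<in> Sigma {U. U \<subseteq> N \<and> card U = Suc k} (\<lambda>U. U)"
    obtain U j where aU: "a = (U, j)" by (cases a)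
    have U: "U \<subseteq> N" "card U = Suc k" "j \<in> U" using a aU by auto
    have fU: "finite U" using U N finite_subset by blast
    show "(case case a of (U, j) \<Rightarrow> (U - {j}, j) of (S, j) \<Rightarrow> (insert j S, j)) = a"
      using U aU by auto
    show "(case a of (U, j) \<Rightarrow> (U - {j}, j)) \<in> Sigma {S. S \<subseteq> N \<and> card S = k} (\<lambda>S. N - S)"
      using U fU aU by auto
  qed
  also have "\<dots> = (\<Sum>U\<in>{U. U \<subseteq> N \<and> card U = Suc k}. \<Sum>j\<in>U. h (U - {j}) j)"
    by (rule sum.Sigma[symmetric]) (use f2 N finite_subset in auto)
  finally show ?thesis .
qed

lemma Er_sum:
  "Er A S = (\<Sum>j\<in>UNIV. (column j A - projS A S (column j A)) \<bullet> (column j A - projS A S (column j A)))"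
  unfolding Er_def frob2_def inner_vec_def
  by (subst sum.swap) (simp add: power2_eq_square column_def)

lemma Er_term_in:
  assumes "j \<in> S"
  shows "column j A - projS A S (column j A) = 0"
proof -
  have "column j A \<in> span ((\<lambda>i. column i A) ` S)" using assms by (simp add: span_base)
  then show ?thesis unfolding projS_def by (simp add: closest_point_self)
qed

lemma gram_Er:
  fixes A :: "real^'n^'m"
  shows "gram_det A S * Er A S = (\<Sum>j\<in>UNIV - S. gram_det A (insert j S))"
proof -
  have "gram_det A S * Er A S = (\<Sum>j\<in>UNIV. gram_det A S *
     ((column j A - projS A S (column j A)) \<bullet> (column j A - projS A S (column j A))))"
    unfolding Er_sum by (simp add: sum_distrib_left)
  also have "\<dots> = (\<Sum>j\<in>UNIV - S. gram_det A S *
     ((column j A - projS A S (column j A)) \<bullet> (column j A - projS A S (column j A))))"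
    by (rule sum.mono_neutral_right) (auto simp: Er_term_in)
  also have "\<dots> = (\<Sum>j\<in>UNIV - S. gram_det A (insert j S))"
    by (intro sum.cong refl) (simp add: schur)
  finally show ?thesis .
qed

lemma dpp_identity:
  fixes A :: "real^'n^'m"
  shows "(\<Sum>S\<in>{S::'n set. card S = k}. gram_det A S * Er A S) = real (Suc k) * (\<Sum>U\<in>{U::'n set. card U = Suc k}. gram_det A U)"
proof -
  have "(\<Sum>S\<in>{S. card S = k}. gram_det A S * Er A S) =
        (\<Sum>S\<in>{S::'n set. S \<subseteq> UNIV \<and> card S = k}. \<Sum>j\<in>UNIV - S. gram_det A (insert j S))"
    by (simp add: gram_Er)
  also have "\<dots> = (\<Sum>U\<in>{U::'n set. U \<subseteq> UNIV \<and> card U = Suc k}. \<Sum>j\<in>U. gram_det A (insert j (U - {j})))"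
    by (rule double_count) simp
  also have "\<dots> = (\<Sum>U\<in>{U::'n set. card U = Suc k}. real (Suc k) * gram_det A U)"
  proof (intro sum.cong refl)
    fix U :: "'n set" assume "U \<in> {U. card U = Suc k}"
    then have "card U = Suc k" by simp
    have "(\<Sum>j\<in>U. gram_det A (insert j (U - {j}))) = (\<Sum>j\<in>U. gram_det A U)"
      by (intro sum.cong refl) (simp add: insert_absorb)
    also have "\<dots> = real (Suc k) * gram_det A U" using \<open>card U = Suc k\<close> by simp
    finally show "(\<Sum>j\<in>U. gram_det A (insert j (U - {j}))) = real (Suc k) * gram_det A U" .
  qed simp
  finally show ?thesis by (simp add: sum_distrib_left)
qed

lemma esym_ineq:
  fixes l :: "real list"
  assumes sl: "sorted_wrt (\<ge>) l" and pos: "\<And>i. i < length l \<Longrightarrow> l!i \<ge> 0"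
    and sk: "s < k" and kn: "k < length l"
  shows "real (Suc k - s) * esym l (Suc k) \<le> real (length l - k) * l!s * esym l k"
proof -
  define n where "n = length l"
  define N where "N = {..<n}"
  define w where "w U = (\<Prod>i\<in>U. l!i)" for U
  define h where "h S j = (if s \<le> j then w S * l!j else 0)" for S j
  have fN: "finite N" unfolding N_def by simp
  have w0: "w U \<ge> 0" if "U \<subseteq> N" for U
    unfolding w_def using that pos by (intro prod_nonneg) (auto simp: N_def n_def)
  have ls: "l!j \<le> l!s" if "s \<le> j" "j < n" for j
  proof (cases "s = j")
    case False
    then show ?thesis using sorted_wrt_nth_less[OF sl, of s j] that n_def by simp
  qed simp
  have "real (Suc k - s) * esym l (Suc k) = (\<Sum>U\<in>{U. U \<subseteq> N \<and> card U = Suc k}. real (Suc k - s) * w U)"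
    unfolding esym_def N_def n_def w_def by (simp add: sum_distrib_left)
  also have "\<dots> \<le> (\<Sum>U\<in>{U. U \<subseteq> N \<and> card U = Suc k}. \<Sum>j\<in>U. h (U - {j}) j)"
  proof (rule sum_mono)
    fix U assume U: "U \<in> {U. U \<subseteq> N \<and> card U = Suc k}"
    have fU: "finite U" using U fN finite_subset by blast
    have c1: "card {j\<in>U. j < s} \<le> s"
    proof -
      have "{j\<in>U. j < s} \<subseteq> {..<s}" by auto
      then show ?thesis using card_mono[of "{..<s}"] by fastforce
    qed
    have "card U = card {j\<in>U. j < s} + card {j\<in>U. s \<le> j}"
    proof -
      have "U = {j\<in>U. j < s} \<union> {j\<in>U. s \<le> j}" by auto
      moreover have "{j\<in>U. j < s} \<inter> {j\<in>U. s \<le> j} = {}" by auto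
      ultimately show ?thesis using fU by (metis (no_types, lifting) card_Un_disjoint finite_Un)
    qed
    then have "card {j\<in>U. j < s} + card {j\<in>U. s \<le> j} = Suc k" using U by simp
    then have c2: "Suc k - s \<le> card {j\<in>U. s \<le> j}" using c1 by linarith
    have "(\<Sum>j\<in>U. h (U - {j}) j) = (\<Sum>j\<in>U. if s \<le> j then w U else 0)"
    proof (intro sum.cong refl)
      fix j assume "j \<in> U"
      then have "w U = w (U - {j}) * l!j" unfolding w_def using fU by (simp add: prod.remove mult.commute)
      then show "h (U - {j}) j = (if s \<le> j then w U else 0)" unfolding h_def by simp
    qed
    also have "\<dots> = real (card {j\<in>U. s \<le> j}) * w U"
      using fU by (simp add: sum.If_cases Int_def)
    finally have "(\<Sum>j\<in>U. h (U - {j}) j) = real (card {j\<in>U. s \<le> j}) * w U" .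
    moreover have "real (Suc k - s) * w U \<le> real (card {j\<in>U. s \<le> j}) * w U"
      using c2 w0[of U] U by (intro mult_right_mono) auto
    ultimately show "real (Suc k - s) * w U \<le> (\<Sum>j\<in>U. h (U - {j}) j)" by simp
  qed
  also have "\<dots> = (\<Sum>S\<in>{S. S \<subseteq> N \<and> card S = k}. \<Sum>j\<in>N - S. h S j)"
    by (rule double_count[symmetric, OF fN])
  also have "\<dots> \<le> (\<Sum>S\<in>{S. S \<subseteq> N \<and> card S = k}. \<Sum>j\<in>N - S. w S * l!s)"
  proof (intro sum_mono)
    fix S j assume S: "S \<in> {S. S \<subseteq> N \<and> card S = k}" and j: "j \<in> N - S"
    have "w S \<ge> 0" using S w0 by simp
    moreover have "l!s \<ge> 0" using pos sk kn by simp
    moreover have "j < n" using j N_def by simp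
    ultimately show "h S j \<le> w S * l!s" unfolding h_def using ls[of j]
      by (auto intro: mult_left_mono)
  qed
  also have "\<dots> = (\<Sum>S\<in>{S. S \<subseteq> N \<and> card S = k}. real (n - k) * l!s * w S)"
  proof (intro sum.cong refl)
    fix S assume S: "S \<in> {S. S \<subseteq> N \<and> card S = k}"
    have SN: "S \<subseteq> N" and cS: "card S = k" using S by auto
    have "finite S" using SN fN finite_subset by blast
    then have "card (N - S) = card N - card S" using SN by (rule card_Diff_subset)
    then have "card (N - S) = n - k" using cS by (simp add: N_def)
    then show "(\<Sum>j\<in>N - S. w S * l!s) = real (n - k) * l!s * w S" by simp
  qed
  also have "\<dots> = real (n - k) * l!s * esym l k"
    unfolding esym_def N_def n_def w_def by (simp add: sum_distrib_left)
  finally show ?thesis unfolding n_def .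
qed

lemma bessel:
  fixes U :: "'a::euclidean_space set"
  assumes fU: "finite U" and orth: "pairwise orthogonal U" and nrm: "\<And>u. u \<in> U \<Longrightarrow> norm u = 1"
  shows "(\<Sum>u\<in>U. (v \<bullet> u)^2) \<le> v \<bullet> v"
proof -
  define p where "p = (\<Sum>u\<in>U. (v \<bullet> u) *\<^sub>R u)"
  have up: "u \<bullet> p = v \<bullet> u" if u: "u \<in> U" for u
  proof -
    have "u \<bullet> p = (\<Sum>w\<in>U. (v \<bullet> w) * (u \<bullet> w))" unfolding p_def by (simp add: inner_sum_right)
    also have "\<dots> = (v \<bullet> u) * (u \<bullet> u) + (\<Sum>w\<in>U - {u}. (v \<bullet> w) * (u \<bullet> w))"
      using sum.remove[OF fU u, of "\<lambda>w. (v \<bullet> w) * (u \<bullet> w)"] by simp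
    also have "(\<Sum>w\<in>U - {u}. (v \<bullet> w) * (u \<bullet> w)) = 0"
    proof (rule sum.neutral, rule ballI)
      fix w assume w: "w \<in> U - {u}"
      then have "orthogonal u w" using pairwiseD[OF orth u, of w] by auto
      then show "(v \<bullet> w) * (u \<bullet> w) = 0" unfolding orthogonal_def by simp
    qed
    also have "u \<bullet> u = 1" using nrm[OF u] power2_norm_eq_inner[of u] by simp
    finally show ?thesis by simp
  qed
  have vp: "v \<bullet> p = (\<Sum>u\<in>U. (v \<bullet> u)^2)" unfolding p_def by (simp add: inner_sum_right power2_eq_square)
  have pp: "p \<bullet> p = (\<Sum>u\<in>U. (v \<bullet> u)^2)"
  proof -
    have "p \<bullet> p = (\<Sum>u\<in>U. (v \<bullet> u) * (u \<bullet> p))" unfolding p_def by (simp add: inner_sum_left)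
    also have "\<dots> = (\<Sum>u\<in>U. (v \<bullet> u)^2)" by (intro sum.cong refl) (simp add: up power2_eq_square)
    finally show ?thesis .
  qed
  have "0 \<le> (v - p) \<bullet> (v - p)" by simp
  also have "\<dots> = v \<bullet> v - 2 * (v \<bullet> p) + p \<bullet> p" by (simp add: inner_diff_left inner_diff_right inner_commute[of p v])
  finally show ?thesis using vp pp by simp
qed

lemma frob_bessel:
  fixes C :: "real^'n^'m" and U :: "(real^'n) set"
  assumes fU: "finite U" and orth: "pairwise orthogonal U" and nrm: "\<And>u. u \<in> U \<Longrightarrow> norm u = 1"
  shows "(\<Sum>u\<in>U. (C *v u) \<bullet> (C *v u)) \<le> frob2 C"
proof -
  have mv: "(C *v u) $ i = row i C \<bullet> u" for u i
    by (simp add: matrix_vector_mult_def inner_vec_def row_def)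
  have "(C *v u) \<bullet> (C *v u) = (\<Sum>i\<in>UNIV. (row i C \<bullet> u)^2)" for u
  proof -
    have "(C *v u) \<bullet> (C *v u) = (\<Sum>i\<in>UNIV. (C *v u)$i * (C *v u)$i)" by (simp add: inner_vec_def)
    then show ?thesis by (simp add: mv power2_eq_square)
  qed
  then have "(\<Sum>u\<in>U. (C *v u) \<bullet> (C *v u)) = (\<Sum>u\<in>U. \<Sum>i\<in>UNIV. (row i C \<bullet> u)^2)" by simp
  also have "\<dots> = (\<Sum>i\<in>UNIV. \<Sum>u\<in>U. (row i C \<bullet> u)^2)" by (rule sum.swap)
  also have "\<dots> \<le> (\<Sum>i\<in>UNIV. row i C \<bullet> row i C)"
    by (rule sum_mono) (rule bessel[OF fU orth nrm])
  also have "\<dots> = frob2 C"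
  proof -
    have "row i C \<bullet> row i C = (\<Sum>j\<in>UNIV. (C $ i $ j)^2)" for i
      by (simp add: inner_vec_def row_def power2_eq_square)
    then show ?thesis unfolding frob2_def by simp
  qed
  finally show ?thesis .
qed

lemma normsq_A:
  fixes A :: "real^'n^'m"
  shows "(A *v u) \<bullet> (A *v u) = u \<bullet> ((transpose A ** A) *v u)"
proof -
  have "u \<bullet> ((transpose A ** A) *v u) = u \<bullet> (transpose A *v (A *v u))"
    by (simp add: matrix_vector_mul_assoc)
  also have "\<dots> = u \<bullet> ((A *v u) v* A)" by simp
  also have "\<dots> = (A *v u) \<bullet> (A *v u)" by (simp only: inner_commute[of u] dot_lmul_matrix)
  finally show ?thesis by simp
qed

lemma opt_lower:
  fixes A B :: "real^'n^'m"
  assumes rk: "rank B = k" and ray: "\<And>x. x \<bullet> ((transpose A ** A) *v x) \<ge> \<mu> * (x \<bullet> x)"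
  shows "frob2 (A - B) \<ge> real (CARD('n) - k) * \<mu>"
proof -
  define R where "R = span (rows B)"
  define W where "W = {y. \<forall>x\<in>R. orthogonal x y}"
  have subR: "subspace R" unfolding R_def by simp
  have subW: "subspace W" unfolding W_def by (rule subspace_orthogonal_to_vectors)
  have dR: "dim R = k" unfolding R_def using rk by (simp add: row_rank_def)
  have "dim {y \<in> UNIV. \<forall>x\<in>R. orthogonal x y} + dim R = dim (UNIV :: (real^'n) set)"
    by (rule dim_subspace_orthogonal_to_vectors[OF subR subspace_UNIV]) simp
  then have dW: "dim W = CARD('n) - k" using dR unfolding W_def by simp
  obtain Bs where Bs: "Bs \<subseteq> W" "pairwise orthogonal Bs" "\<And>x. x \<in> Bs \<Longrightarrow> norm x = 1"
    "independent Bs" "card Bs = dim W" "span Bs = W"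
    using orthonormal_basis_subspace[OF subW] by metis
  have fB: "finite Bs" using Bs(4) by (rule independent_imp_finite)
  have Bu: "B *v u = 0" if "u \<in> Bs" for u
  proof -
    have uW: "u \<in> W" using that Bs(1) by blast
    have "row i B \<bullet> u = 0" for i
    proof -
      have "row i B \<in> R" unfolding R_def rows_def by (intro span_base) blast
      then show ?thesis using uW unfolding W_def orthogonal_def by blast
    qed
    then show ?thesis by (simp add: vec_eq_iff matrix_vector_mult_def row_def inner_vec_def)
  qed
  have "real (CARD('n) - k) * \<mu> = (\<Sum>u\<in>Bs. \<mu>)" using Bs(5) dW by simp
  also have "\<dots> \<le> (\<Sum>u\<in>Bs. ((A - B) *v u) \<bullet> ((A - B) *v u))"
  proof (rule sum_mono)
    fix u assume u: "u \<in> Bs"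
    have "(A - B) *v u = A *v u" using Bu[OF u] by (simp add: matrix_vector_mult_diff_rdistrib)
    moreover have "u \<bullet> u = 1" using Bs(3)[OF u] power2_norm_eq_inner[of u] by simp
    ultimately show "\<mu> \<le> ((A - B) *v u) \<bullet> ((A - B) *v u)" using ray[of u] by (simp add: normsq_A)
  qed
  also have "\<dots> \<le> frob2 (A - B)" by (rule frob_bessel[OF fB Bs(2,3)])
  finally show ?thesis .
qed

lemma rank_k_exists:
  fixes A :: "real^'n^'m"
  assumes inj: "\<And>x. A *v x = 0 \<Longrightarrow> x = 0" and k: "k \<le> CARD('n)"
  shows "\<exists>B::real^'n^'m. rank B = k"
proof -
  obtain K :: "'n set" where K: "card K = k" using obtain_subset_with_card_n[of k "UNIV::'n set"] k by auto
  define D :: "real^'n^'n" where "D = (\<chi> i j. if i = j \<and> i \<in> K then 1 else 0)"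
  have Dv: "D *v x = (\<chi> i. if i \<in> K then x$i else 0)" for x
  proof -
    have "(D *v x)$i = (if i \<in> K then x$i else 0)" for i
    proof -
      have "(D *v x)$i = (\<Sum>j\<in>UNIV. (if i = j then (if i \<in> K then 1 else 0) else 0) * x$j)"
        unfolding D_def matrix_vector_mult_def by (auto intro!: sum.cong)
      also have "\<dots> = (if i \<in> K then 1 else 0) * x$i" by (rule sum_delta_l)
      also have "\<dots> = (if i \<in> K then x$i else 0)" by simp
      finally show ?thesis .
    qed
    then show ?thesis by (simp add: vec_eq_iff)
  qed
  have rD: "range ((*v) D) = {x. \<forall>i. i \<notin> K \<longrightarrow> x$i = 0}"
  proof (intro set_eqI iffI)
    fix y assume "y \<in> range ((*v) D)"
    then show "y \<in> {x. \<forall>i. i \<notin> K \<longrightarrow> x$i = 0}" by (auto simp: Dv)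
  next
    fix y :: "real^'n" assume "y \<in> {x. \<forall>i. i \<notin> K \<longrightarrow> x$i = 0}"
    then have "D *v y = y" by (auto simp: Dv vec_eq_iff)
    then show "y \<in> range ((*v) D)" by (metis rangeI)
  qed
  have linA: "linear ((*v) A)" by (simp add: matrix_vector_mul_linear)
  have injA: "inj_on ((*v) A) (span (range ((*v) D)))"
    unfolding inj_on_def
  proof (intro ballI impI)
    fix x y assume "A *v x = A *v y"
    then have "A *v (x - y) = 0" by (simp add: matrix_vector_mult_diff_distrib)
    then have "x - y = 0" by (rule inj)
    then show "x = y" by simp
  qed
  have "rank (A ** D) = dim (range ((*v) (A ** D)))" by (rule rank_dim_range)
  also have "range ((*v) (A ** D)) = (*v) A ` range ((*v) D)"
    by (auto simp: matrix_vector_mul_assoc[symmetric] image_iff)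
  also have "dim \<dots> = dim (range ((*v) D))" by (rule dim_image_eq[OF linA injA])
  also have "\<dots> = card K" unfolding rD dim_vec_eq[symmetric] by (rule dim_substandard_cart)
  finally show ?thesis using K by blast
qed

lemma gram_pminor: "gram_det A S = pminor (transpose A ** A) S"
  unfolding gram_det_def pminor_def matrix_mult_transpose_dot_column by simp

lemma esym_pos:
  assumes pos: "\<And>i. i < length l \<Longrightarrow> l!i > 0" and k: "k \<le> length l"
  shows "esym l k > 0"
  unfolding esym_def
proof (rule sum_pos)
  show "finite {T. T \<subseteq> {..<length l} \<and> card T = k}" by simp
  show "{T. T \<subseteq> {..<length l} \<and> card T = k} \<noteq> {}"
    using k by (auto intro!: exI[of _ "{..<k}"])
  fix T assume "T \<in> {T. T \<subseteq> {..<length l} \<and> card T = k}"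
  then show "(\<Prod>i\<in>T. l!i) > 0" using pos by (intro prod_pos) auto
qed

lemma esym_nonneg:
  assumes pos: "\<And>i. i < length l \<Longrightarrow> l!i \<ge> 0"
  shows "esym l k \<ge> 0"
  unfolding esym_def using pos by (intro sum_nonneg prod_nonneg) auto

theorem lemma8:
  fixes A :: "real^'n^'m" and s k :: nat and \<epsilon> :: real
  assumes "s < k" and "k < CARD('n)"
    and "lam A (CARD('n)) > 0"
    and "0 < \<epsilon>" and "\<epsilon> \<le> 1/2"
  shows "dpp_expected_Er A k / OPT A k \<le>
    inverse (1 - exp (- (\<epsilon>^2 * real (min (k - s) (CARD('n) - k)) / 10))) *
    inverse (1 - \<epsilon>) *
    ((lam A (s + 1) / lam A (CARD('n))) * (1 + real s / real (k - s)))"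
proof -
  note sk = assms(1) and kn = assms(2) and eps = assms(4,5)
  define n where "n = CARD('n)"
  define M where "M = transpose A ** A"
  define l where "l = eigs M"
  have sym: "transpose M = M" unfolding M_def by (simp add: matrix_transpose_mul)
  have len: "length l = n" and sl: "sorted_wrt (\<ge>) l"
    and cp: "\<forall>x. det (mat x - M) = (\<Prod>i<n. x - l!i)"
    using eigs_prop[OF sym] unfolding l_def n_def by auto
  have n1: "n \<ge> 1" using kn n_def by simp
  define lmin where "lmin = l ! (n - 1)"
  have lamn: "lam A n = lmin" unfolding lam_def lmin_def l_def M_def by simp
  have lam1: "lam A (s + 1) = l ! s" unfolding lam_def l_def M_def by simp
  have lminp: "lmin > 0" using assms(3) lamn n_def by simp
  have lge: "l ! i \<ge> lmin" if "i < n" for i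
  proof (cases "i = n - 1")
    case False
    then have "i < n - 1" using that by simp
    then show ?thesis using sorted_wrt_nth_less[OF sl, of i "n - 1"] len n1 lmin_def by simp
  qed (simp add: lmin_def)
  have lpos: "l ! i > 0" if "i < length l" for i using lge[of i] lminp that len by simp
  have ray: "x \<bullet> (M *v x) \<ge> lmin * (x \<bullet> x)" for x
    using rayleigh[OF sym, of l] len sl cp n_def lmin_def by simp
  have Z: "(\<Sum>S\<in>{S::'n set. card S = j}. gram_det A S) = esym l j" if "j \<le> n" for j
  proof -
    have "Zs M j = esym l j" by (rule coeff_match) (use len cp that n_def in auto)
    then show ?thesis unfolding Zs_def M_def gram_pminor .
  qed
  have ekpos: "esym l k > 0" using esym_pos[of l k] lpos len kn n_def by simp
  have ek1: "esym l (Suc k) \<ge> 0" using esym_nonneg[of l] lpos len by (simp add: less_imp_le)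
  have E: "dpp_expected_Er A k = real (Suc k) * esym l (Suc k) / esym l k"
    unfolding dpp_expected_Er_def dpp_identity using Z[of k] Z[of "Suc k"] kn n_def by simp
  have ineq: "real (Suc k - s) * esym l (Suc k) \<le> real (n - k) * l!s * esym l k"
    using esym_ineq[OF sl, of s k] lpos len sk kn n_def by (simp add: less_imp_le)
  have inj: "A *v x = 0 \<Longrightarrow> x = 0" for x
  proof -
    assume "A *v x = 0"
    then have "0 = x \<bullet> (M *v x)" using normsq_A[of A x] unfolding M_def by simp
    then have "lmin * (x \<bullet> x) \<le> 0" using ray[of x] by simp
    then have "x \<bullet> x \<le> 0" using lminp by (simp add: mult_le_0_iff)
    then have "x \<bullet> x = 0" using inner_ge_zero[of x] by linarith
    then show "x = 0" by simp
  qed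
  obtain B0 :: "real^'n^'m" where B0: "rank B0 = k" using rank_k_exists[OF inj, where k = k] kn n_def by auto
  have optl: "OPT A k \<ge> real (n - k) * lmin"
    unfolding OPT_def
  proof (rule cInf_greatest)
    show "{frob2 (A - B) |B. rank B = k} \<noteq> {}" using B0 by blast
    fix y assume "y \<in> {frob2 (A - B) |B. rank B = k}"
    then obtain B where "y = frob2 (A - B)" "rank B = k" by blast
    then show "real (n - k) * lmin \<le> y" using opt_lower[where B = B and k = k and A = A and \<mu> = lmin] ray unfolding M_def n_def by simp
  qed
  have nk: "real (n - k) > 0" using kn n_def by simp
  have optp: "OPT A k > 0" using optl nk lminp by (smt (verit) mult_pos_pos)
  define L where "L = l ! s"
  have Lp: "L > 0" unfolding L_def using lpos sk kn len n_def by simp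
  have E0: "dpp_expected_Er A k \<ge> 0" unfolding E using ek1 ekpos by simp
  have "dpp_expected_Er A k \<le> real (Suc k) * (real (n - k) * L / real (Suc k - s))"
  proof -
    have sks: "real (Suc k - s) > 0" using sk by simp
    have "esym l (Suc k) \<le> real (n - k) * L * esym l k / real (Suc k - s)"
      using ineq sks unfolding L_def by (simp add: field_simps)
    then have "esym l (Suc k) / esym l k \<le> real (n - k) * L / real (Suc k - s)"
      using ekpos by (simp add: field_simps)
    then have "real (Suc k) * (esym l (Suc k) / esym l k) \<le> real (Suc k) * (real (n - k) * L / real (Suc k - s))"
      by (rule mult_left_mono) simp
    then show ?thesis unfolding E by (metis times_divide_eq_right)
  qed
  then have X1: "dpp_expected_Er A k / OPT A k \<le> real (Suc k) * (real (n - k) * L / real (Suc k - s)) / (real (n - k) * lmin)"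
  proof -
    assume h: "dpp_expected_Er A k \<le> real (Suc k) * (real (n - k) * L / real (Suc k - s))"
    have "dpp_expected_Er A k / OPT A k \<le> dpp_expected_Er A k / (real (n - k) * lmin)"
      by (rule divide_left_mono[OF optl E0]) (use optp nk lminp in simp)
    also have "\<dots> \<le> real (Suc k) * (real (n - k) * L / real (Suc k - s)) / (real (n - k) * lmin)"
      using h nk lminp by (intro divide_right_mono) auto
    finally show ?thesis .
  qed
  have Y: "real (Suc k) * (real (n - k) * L / real (Suc k - s)) / (real (n - k) * lmin) \<le>
      (L / lmin) * (1 + real s / real (k - s))"
  proof -
    have ks: "real (k - s) > 0" "real (Suc k - s) = real (k - s) + 1" "real (k - s) = real k - real s"
      using sk by auto
    have "real (Suc k) * (real (n - k) * L / real (Suc k - s)) / (real (n - k) * lmin)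
        = (L / lmin) * (real (Suc k) / real (Suc k - s))"
    proof -
      have gen: "\<And>a m d c. a > 0 \<Longrightarrow> m > 0 \<Longrightarrow> d > 0 \<Longrightarrow> c * (a * L / d) / (a * m) = (L / m) * (c / (d::real))"
        by (simp add: field_simps)
      show ?thesis by (rule gen) (use nk lminp sk in auto)
    qed
    also have "\<dots> \<le> (L / lmin) * (1 + real s / real (k - s))"
    proof (rule mult_left_mono)
      show "0 \<le> L / lmin" using Lp lminp by simp
      have "real (Suc k) * real (k - s) \<le> (real (k - s) + real s) * (real (k - s) + 1)"
        using ks by (simp add: algebra_simps)
      then show "real (Suc k) / real (Suc k - s) \<le> 1 + real s / real (k - s)"
        using ks by (simp add: field_simps)
    qed
    finally show ?thesis .
  qed
  define C1 where "C1 = inverse (1 - exp (- (\<epsilon>^2 * real (min (k - s) (CARD('n) - k)) / 10)))"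
  define C2 where "C2 = inverse (1 - \<epsilon>)"
  have t0: "\<epsilon>^2 * real (min (k - s) (CARD('n) - k)) / 10 > 0"
    using eps sk kn by simp
  have C1: "C1 \<ge> 1"
  proof -
    have "exp (- (\<epsilon>^2 * real (min (k - s) (CARD('n) - k)) / 10)) < 1" using t0 by simp
    moreover have "exp (- (\<epsilon>^2 * real (min (k - s) (CARD('n) - k)) / 10)) > 0" by simp
    ultimately show ?thesis unfolding C1_def by (simp add: one_le_inverse_iff)
  qed
  have C2: "C2 \<ge> 1" unfolding C2_def using eps by (simp add: one_le_inverse_iff)
  have Yn: "(L / lmin) * (1 + real s / real (k - s)) \<ge> 0" using Lp lminp by simp
  have "dpp_expected_Er A k / OPT A k \<le> (L / lmin) * (1 + real s / real (k - s))"
    by (rule order_trans[OF X1 Y])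
  also have "\<dots> \<le> (C1 * C2) * ((L / lmin) * (1 + real s / real (k - s)))"
  proof -
    have "C1 * C2 \<ge> 1" using C1 C2 by (metis mult_mono' mult_1 zero_le_one)
    then show ?thesis using Yn by (metis mult_1 mult_right_mono)
  qed
  finally show ?thesis unfolding C1_def C2_def L_def lam1 lamn[unfolded n_def] n_def by simp
qed

end
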